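(* Let $R>0$ be such that $B_R\subset\Omega$ (a ball of radius $R$), let $c\in(0,1)$, $\eta\in C_0^\infty(B_{cR})$ (with $B_{cR}$ the concentric ball of radius $cR$), and $s\in(0,1)$. Then for functions $f$ on $B_R$ (with $\eta f$ extended by zero to $\Omega$), \[ \|\eta f\|_{H^{-s}(\Omega)}\le C_{\rm loc}\|\eta\|_{L^\infty(B_{cR})}\|f\|_{L^2(B_{cR})}, \] \[ \|\eta f\|_{H^{1-s}(\Omega)}\le C_{\mathrm{loc},2}\Big[\big(R^s\|\nabla\eta\|_{L^\infty(B_{cR})}+(R^{s-1}+1)\|\eta\|_{L^\infty(B_{cR})}\big)\|f\|_{L^2(B_R)}+\|\eta\|_{L^\infty(B_{cR})}|f|_{H^{1-s}(B_R)}\Big], \] where $C_{\rm loc}$ depends only on $\Omega$ and $s$, and $C_{\mathrm{loc},2}$ depends additionally on $c$.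
   Context: $\Omega\subset\mathbb{R}^3$ is a bounded Lipschitz domain (polyhedron). For $t\in(0,1)$ and open $\omega\subset\mathbb{R}^3$, $|v|^2_{H^t(\omega)}=\int_\omega\int_\omega\frac{|v(x)-v(z)|^2}{|x-z|^{3+2t}}\,dz\,dx$ and $\|v\|^2_{H^t(\omega)}=\|v\|^2_{L^2(\omega)}+|v|^2_{H^t(\omega)}$. $H^{-s}(\Omega)$ is the dual space of $\widetilde H^s(\Omega)=\{u\in H^s(\mathbb{R}^3):u\equiv0\text{ on }\mathbb{R}^3\setminus\overline\Omega\}$, with the duality pairing extending the $L^2(\Omega)$ inner product. *)

theory Defs
  imports "HOL-Analysis.Analysis"
begin

type_synonym R3 = "real^3"

definition ennsqrt :: "ennreal \<Rightarrow> ennreal" where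
  "ennsqrt x = (if x = \<infinity> then \<infinity> else ennreal (sqrt (enn2real x)))"

definition L2_sq :: "(R3 \<Rightarrow> real) \<Rightarrow> R3 set \<Rightarrow> ennreal" where
  "L2_sq v \<omega> = (\<integral>\<^sup>+ x\<in>\<omega>. ennreal ((v x)\<^sup>2) \<partial>lborel)"

definition L2_norm :: "(R3 \<Rightarrow> real) \<Rightarrow> R3 set \<Rightarrow> ennreal" where
  "L2_norm v \<omega> = ennsqrt (L2_sq v \<omega>)"

definition Hs_semi_sq :: "(R3 \<Rightarrow> real) \<Rightarrow> R3 set \<Rightarrow> real \<Rightarrow> ennreal" where
  "Hs_semi_sq v \<omega> t = (\<integral>\<^sup>+ x\<in>\<omega>. (\<integral>\<^sup>+ z\<in>\<omega>.
      ennreal ((v x - v z)\<^sup>2 / (norm (x - z)) powr (3 + 2 * t)) \<partial>lborel) \<partial>lborel)"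

definition Hs_semi :: "(R3 \<Rightarrow> real) \<Rightarrow> R3 set \<Rightarrow> real \<Rightarrow> ennreal" where
  "Hs_semi v \<omega> t = ennsqrt (Hs_semi_sq v \<omega> t)"

definition Hs_norm :: "(R3 \<Rightarrow> real) \<Rightarrow> R3 set \<Rightarrow> real \<Rightarrow> ennreal" where
  "Hs_norm v \<omega> t = ennsqrt (L2_sq v \<omega> + Hs_semi_sq v \<omega> t)"

definition Htilde :: "real \<Rightarrow> R3 set \<Rightarrow> (R3 \<Rightarrow> real) set" where
  "Htilde s \<Omega> = {u. u \<in> borel_measurable lborel \<and> Hs_norm u UNIV s < \<infinity> \<and>
                      (\<forall>x. x \<notin> closure \<Omega> \<longrightarrow> u x = 0)}"

definition Hneg_norm :: "(R3 \<Rightarrow> real) \<Rightarrow> R3 set \<Rightarrow> real \<Rightarrow> ennreal" where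
  "Hneg_norm g \<Omega> s = (SUP u\<in>{u\<in>Htilde s \<Omega>. Hs_norm u UNIV s \<noteq> 0}.
       ennreal (abs (LINT x:\<Omega>|lborel. g x * u x)) / Hs_norm u UNIV s)"

definition partial :: "3 \<Rightarrow> (R3 \<Rightarrow> real) \<Rightarrow> R3 \<Rightarrow> real" where
  "partial i f x = deriv (\<lambda>t. f (x + t *\<^sub>R axis i 1)) 0"

definition smooth :: "(R3 \<Rightarrow> real) \<Rightarrow> bool" where
  "smooth f \<longleftrightarrow> (\<forall>is :: 3 list. (foldr partial is f) differentiable_on UNIV)"

definition C0_inf :: "R3 set \<Rightarrow> (R3 \<Rightarrow> real) set" where
  "C0_inf U = {f. smooth f \<and> compact (closure {x. f x \<noteq> 0}) \<and> closure {x. f x \<noteq> 0} \<subseteq> U}"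

definition lipschitz_domain :: "R3 set \<Rightarrow> bool" where
  "lipschitz_domain \<Omega> \<longleftrightarrow> open \<Omega> \<and> connected \<Omega> \<and> \<Omega> \<noteq> {} \<and> bounded \<Omega> \<and>
    (\<forall>p\<in>frontier \<Omega>. \<exists>r>0. \<exists>(Q::R3 \<Rightarrow> R3) (g::real \<Rightarrow> real \<Rightarrow> real) L.
        orthogonal_transformation Q \<and>
        (\<forall>a b a' b'. \<bar>g a b - g a' b'\<bar> \<le> L * sqrt ((a - a')\<^sup>2 + (b - b')\<^sup>2)) \<and>
        \<Omega> \<inter> ball p r = {x \<in> ball p r. Q (x - p) $ 3 < g (Q (x - p) $ 1) (Q (x - p) $ 2)})"

definition sup_norm :: "(R3 \<Rightarrow> real) \<Rightarrow> R3 set \<Rightarrow> ennreal" where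
  "sup_norm f U = (SUP x\<in>U. ennreal \<bar>f x\<bar>)"

definition grad_sup_norm :: "(R3 \<Rightarrow> real) \<Rightarrow> R3 set \<Rightarrow> ennreal" where
  "grad_sup_norm f U = (SUP x\<in>U. ennreal (norm (\<chi> i. partial i f x)))"

end

theory Submission
  imports Defs
begin
lemma dyadic_exists:
  fixes y :: real assumes "1 \<le> y"
  shows "\<exists>k::nat. 2^k \<le> y \<and> y < 2^(k+1)"
proof -
  define l where "l = log 2 y"
  have l0: "0 \<le> l" using assms by (simp add: l_def)
  define k where "k = nat \<lfloor>l\<rfloor>"
  have kk: "real k = of_int \<lfloor>l\<rfloor>" using l0 by (simp add: k_def)
  have "(2::real)^k = 2 powr (real k)" by (simp add: powr_realpow)
  also have "\<dots> \<le> 2 powr l" using kk by (simp add: powr_mono)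
  also have "\<dots> = y" using assms by (simp add: l_def)
  finally have 1: "2^k \<le> y" .
  have "y = 2 powr l" using assms by (simp add: l_def)
  also have "\<dots> < 2 powr (real k + 1)" using kk by (intro powr_less_mono) linarith+
  also have "\<dots> = 2^(k+1)" using powr_realpow[of 2 "k+1"] by (simp add: add.commute)
  finally show ?thesis using 1 by blast
qed

lemma vol_cball: "emeasure lborel (cball (x::R3) r) = ennreal (unit_ball_vol 3 * r^3)" if "r \<ge> 0"
  using emeasure_cball[OF that, of x] by simp

lemma pow_powr_swap: "(x::real) > 0 \<Longrightarrow> (x powr y)^n = (x^n) powr y"
proof -
  assume x: "x > 0"
  have "(x^n) powr y = (x powr real n) powr y" using powr_realpow[OF x] by simp
  also have "\<dots> = x powr (real n * y)" by (simp add: powr_powr)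
  finally show ?thesis using x by (simp add: powr_power)
qed

lemma powr_3_split: "(x::real) > 0 \<Longrightarrow> x powr (3 - b) = x^3 * x powr (-b)"
  using powr_add[of x 3 "-b"] by simp

lemma kern_arith: fixes \<rho> w V b :: real assumes "\<rho> > 0" "w > 0"
  shows "(\<rho>*w) powr (-b) * (V * (\<rho>*(w*2))^3) = 8 * V * \<rho> powr (3 - b) * w powr (3 - b)"
proof -
  have "(\<rho>*w) powr (-b) * (V * (\<rho>*(w*2))^3) = 8 * V * (\<rho>^3 * \<rho> powr (-b)) * (w^3 * w powr (-b))"
    using assms by (simp add: powr_mult power_mult_distrib)
  then show ?thesis using assms by (simp add: powr_3_split)
qed

lemma ennreal_le_suminf: "(f::nat \<Rightarrow> ennreal) k \<le> suminf f"
  using sum_le_suminf[of f "{k}"] by simp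

lemma far_kernel:
  fixes x :: R3 assumes rho: "0 < \<rho>" and b: "3 < b"
  shows "(\<integral>\<^sup>+z. ennreal (if \<rho> \<le> norm (x - z) then norm (x - z) powr (-b) else 0) \<partial>lborel)
     \<le> ennreal (8 * unit_ball_vol 3 * \<rho> powr (3 - b) / (1 - 2 powr (3 - b)))"
proof -
  define V where "V = unit_ball_vol 3"
  have V: "0 \<le> V" by (simp add: V_def)
  define q where "q = (2::real) powr (3 - b)"
  have q: "0 \<le> q" "q < 1" unfolding q_def using b by (auto intro!: powr_less_one)
  have pt: "ennreal (if \<rho> \<le> norm (x - z) then norm (x - z) powr (-b) else 0)
      \<le> (\<Sum>k. ennreal ((\<rho>*2^k) powr (-b)) * indicator (cball x (\<rho>*2^(k+1))) z)" for z
  proof (cases "\<rho> \<le> norm (x - z)")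
    case True
    then have "1 \<le> norm (x - z) / \<rho>" using rho by simp
    then obtain k where k: "2^k \<le> norm (x - z) / \<rho>" "norm (x - z) / \<rho> < 2^(k+1)"
      using dyadic_exists by blast
    have k1: "\<rho>*2^k \<le> norm (x - z)" using k(1) rho by (simp add: field_simps)
    have k2: "norm (x - z) \<le> \<rho>*2^(k+1)" using k(2) rho by (simp add: field_simps)
    have "norm (x - z) powr (-b) \<le> (\<rho>*2^k) powr (-b)"
      by (rule powr_mono2') (use b rho k1 in auto)
    moreover have "z \<in> cball x (\<rho>*2^(k+1))" using k2 by (simp add: dist_norm)
    ultimately have "ennreal (if \<rho> \<le> norm (x - z) then norm (x - z) powr (-b) else 0)
        \<le> ennreal ((\<rho>*2^k) powr (-b)) * indicator (cball x (\<rho>*2^(k+1))) z"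
      using True by simp
    also have "\<dots> \<le> (\<Sum>k. ennreal ((\<rho>*2^k) powr (-b)) * indicator (cball x (\<rho>*2^(k+1))) z)"
      by (rule ennreal_le_suminf)
    finally show ?thesis .
  next
    case False
    show ?thesis by (simp only: if_not_P[OF False] ennreal_0 zero_le)
  qed
  have "(\<integral>\<^sup>+z. ennreal (if \<rho> \<le> norm (x - z) then norm (x - z) powr (-b) else 0) \<partial>lborel)
     \<le> (\<integral>\<^sup>+z. (\<Sum>k. ennreal ((\<rho>*2^k) powr (-b)) * indicator (cball x (\<rho>*2^(k+1))) z) \<partial>lborel)"
    by (rule nn_integral_mono) (rule pt)
  also have "\<dots> = (\<Sum>k. \<integral>\<^sup>+z. ennreal ((\<rho>*2^k) powr (-b)) * indicator (cball x (\<rho>*2^(k+1))) z \<partial>lborel)"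
    by (rule nn_integral_suminf) (intro borel_measurable_times_ennreal borel_measurable_const borel_measurable_indicator, simp)
  also have "\<dots> = (\<Sum>k. ennreal (8 * V * \<rho> powr (3 - b) * q^k))"
  proof (rule suminf_cong)
    fix k :: nat
    have "(\<integral>\<^sup>+z. ennreal ((\<rho>*2^k) powr (-b)) * indicator (cball x (\<rho>*2^(k+1))) z \<partial>lborel)
        = ennreal ((\<rho>*2^k) powr (-b)) * emeasure lborel (cball x (\<rho>*2^(k+1)))"
      by (rule nn_integral_cmult_indicator) simp
    also have "\<dots> = ennreal ((\<rho>*2^k) powr (-b) * (V * (\<rho>*2^(k+1))^3))"
    proof -
      have "emeasure lborel (cball x (\<rho>*2^(k+1))) = ennreal (V * (\<rho>*2^(k+1))^3)"
        unfolding V_def by (rule vol_cball) (use rho in simp)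
      then show ?thesis
        using ennreal_mult'[of "(\<rho>*2^k) powr (-b)" "V * (\<rho>*2^(k+1))^3"] by simp
    qed
    also have "(\<rho>*2^k) powr (-b) * (V * (\<rho>*2^(k+1))^3) = 8 * V * \<rho> powr (3 - b) * q^k"
    proof -
      have e: "(2::real)^(k+1) = 2^k*2" by simp
      have "(2 powr (3 - b))^k = ((2::real)^k) powr (3 - b)" by (rule pow_powr_swap) simp
      then show ?thesis unfolding e q_def by (simp only:) (rule kern_arith[OF rho], simp)
    qed
    finally show "(\<integral>\<^sup>+z. ennreal ((\<rho>*2^k) powr (-b)) * indicator (cball x (\<rho>*2^(k+1))) z \<partial>lborel)
        = ennreal (8 * V * \<rho> powr (3 - b) * q^k)" .
  qed
  also have "\<dots> = ennreal (\<Sum>k. 8 * V * \<rho> powr (3 - b) * q^k)"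
    by (rule suminf_ennreal2) (use V q rho in \<open>auto intro!: summable_mult summable_geometric\<close>)
  also have "(\<Sum>k. 8 * V * \<rho> powr (3 - b) * q^k) = 8 * V * \<rho> powr (3 - b) / (1 - q)"
    using q by (simp add: suminf_mult suminf_geometric summable_geometric divide_simps)
  finally show ?thesis by (simp add: V_def q_def)
qed

lemma half_powr: "(1/2::real) powr (-b) = 2 powr b"
  by (simp add: powr_minus powr_divide)
lemma half_lt: "0 < a \<Longrightarrow> (1/2::real) powr a < 1"
  by (simp add: powr_divide)
lemma kern_arith2: fixes \<rho> w V b :: real assumes r: "\<rho> > 0" and w: "w > 0"
  shows "(\<rho>/(w*2)) powr (-b) * (V * (\<rho>/w)^3) = 2 powr b * V * \<rho> powr (3 - b) * (1/w) powr (3 - b)"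
proof -
  have e: "\<rho>/(w*2) = \<rho> * (1/w) * (1/2)" by simp
  have "(\<rho>/(w*2)) powr (-b) = \<rho> powr (-b) * (1/w) powr (-b) * 2 powr b"
    unfolding e using r w by (simp only: powr_mult half_powr) 
  moreover have "(\<rho>/w)^3 = \<rho>^3 * (1/w)^3" by (simp add: power_divide)
  moreover have "(1/w) powr (3 - b) = (1/w)^3 * (1/w) powr (-b)" using w by (intro powr_3_split) simp
  moreover have "\<rho> powr (3 - b) = \<rho>^3 * \<rho> powr (-b)" using r by (intro powr_3_split) simp
  ultimately show ?thesis by (simp only: mult_ac)
qed

lemma near_kernel:
  fixes x :: R3 assumes rho: "0 < \<rho>" and b: "b < 3" and b0: "0 < b"
  shows "(\<integral>\<^sup>+z. ennreal (if 0 < norm (x - z) \<and> norm (x - z) < \<rho> then norm (x - z) powr (-b) else 0) \<partial>lborel)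
     \<le> ennreal (2 powr b * unit_ball_vol 3 * \<rho> powr (3 - b) / (1 - (1/2) powr (3 - b)))"
proof -
  define V where "V = unit_ball_vol 3"
  have V: "0 \<le> V" by (simp add: V_def)
  define q where "q = (1/2::real) powr (3 - b)"
  have q: "0 \<le> q" "q < 1" unfolding q_def using b by (auto intro!: half_lt)
  have pt: "ennreal (if 0 < norm (x - z) \<and> norm (x - z) < \<rho> then norm (x - z) powr (-b) else 0)
      \<le> (\<Sum>k. ennreal ((\<rho>/(2^k*2)) powr (-b)) * indicator (cball x (\<rho>/2^k)) z)" for z
  proof (cases "0 < norm (x - z) \<and> norm (x - z) < \<rho>")
    case True
    then have "1 \<le> \<rho> / norm (x - z)" using rho by simp
    then obtain k where k: "2^k \<le> \<rho> / norm (x - z)" "\<rho> / norm (x - z) < 2^(k+1)"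
      using dyadic_exists by blast
    have k1: "norm (x - z) \<le> \<rho>/2^k" using k(1) True by (simp add: field_simps)
    have k2: "\<rho>/(2^k*2) \<le> norm (x - z)" using k(2) True by (simp add: field_simps)
    have "norm (x - z) powr (-b) \<le> (\<rho>/(2^k*2)) powr (-b)"
      by (intro powr_mono2') (use rho k2 b0 in auto)
    moreover have "z \<in> cball x (\<rho>/2^k)" using k1 by (simp add: dist_norm)
    ultimately have "ennreal (if 0 < norm (x - z) \<and> norm (x - z) < \<rho> then norm (x - z) powr (-b) else 0)
        \<le> ennreal ((\<rho>/(2^k*2)) powr (-b)) * indicator (cball x (\<rho>/2^k)) z"
      using True by simp
    also have "\<dots> \<le> (\<Sum>k. ennreal ((\<rho>/(2^k*2)) powr (-b)) * indicator (cball x (\<rho>/2^k)) z)"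
      by (rule ennreal_le_suminf)
    finally show ?thesis .
  next
    case False
    show ?thesis by (simp only: if_not_P[OF False] ennreal_0 zero_le)
  qed
  have "(\<integral>\<^sup>+z. ennreal (if 0 < norm (x - z) \<and> norm (x - z) < \<rho> then norm (x - z) powr (-b) else 0) \<partial>lborel)
     \<le> (\<integral>\<^sup>+z. (\<Sum>k. ennreal ((\<rho>/(2^k*2)) powr (-b)) * indicator (cball x (\<rho>/2^k)) z) \<partial>lborel)"
    by (rule nn_integral_mono) (rule pt)
  also have "\<dots> = (\<Sum>k. \<integral>\<^sup>+z. ennreal ((\<rho>/(2^k*2)) powr (-b)) * indicator (cball x (\<rho>/2^k)) z \<partial>lborel)"
    by (rule nn_integral_suminf) (intro borel_measurable_times_ennreal borel_measurable_const borel_measurable_indicator, simp)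
  also have "\<dots> = (\<Sum>k. ennreal (2 powr b * V * \<rho> powr (3 - b) * q^k))"
  proof (rule suminf_cong)
    fix k :: nat
    have "(\<integral>\<^sup>+z. ennreal ((\<rho>/(2^k*2)) powr (-b)) * indicator (cball x (\<rho>/2^k)) z \<partial>lborel)
        = ennreal ((\<rho>/(2^k*2)) powr (-b)) * emeasure lborel (cball x (\<rho>/2^k))"
      by (rule nn_integral_cmult_indicator) simp
    also have "\<dots> = ennreal ((\<rho>/(2^k*2)) powr (-b) * (V * (\<rho>/2^k)^3))"
    proof -
      have "emeasure lborel (cball x (\<rho>/2^k)) = ennreal (V * (\<rho>/2^k)^3)"
        unfolding V_def by (rule vol_cball) (use rho in simp)
      then show ?thesis
        using ennreal_mult'[of "(\<rho>/(2^k*2)) powr (-b)" "V * (\<rho>/2^k)^3"] by simp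
    qed
    also have "(\<rho>/(2^k*2)) powr (-b) * (V * (\<rho>/2^k)^3) = 2 powr b * V * \<rho> powr (3 - b) * q^k"
    proof -
      have "((1/2) powr (3 - b))^k = ((1/2::real)^k) powr (3 - b)" by (rule pow_powr_swap) simp
      also have "(1/2::real)^k = 1/2^k" by (simp add: power_one_over)
      finally show ?thesis unfolding q_def by (simp only:) (rule kern_arith2[OF rho], simp)
    qed
    finally show "(\<integral>\<^sup>+z. ennreal ((\<rho>/(2^k*2)) powr (-b)) * indicator (cball x (\<rho>/2^k)) z \<partial>lborel)
        = ennreal (2 powr b * V * \<rho> powr (3 - b) * q^k)" .
  qed
  also have "\<dots> = ennreal (\<Sum>k. 2 powr b * V * \<rho> powr (3 - b) * q^k)"
    by (rule suminf_ennreal2) (use V q rho in \<open>auto intro!: summable_mult summable_geometric\<close>)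
  also have "(\<Sum>k. 2 powr b * V * \<rho> powr (3 - b) * q^k) = 2 powr b * V * \<rho> powr (3 - b) / (1 - q)"
    using q by (simp add: suminf_mult suminf_geometric summable_geometric divide_simps)
  finally show ?thesis by (simp add: V_def q_def)
qed

lemma smooth_diff: "smooth \<eta> \<Longrightarrow> \<eta> differentiable (at y)"
proof -
  assume "smooth \<eta>"
  then have "(foldr partial [] \<eta>) differentiable_on UNIV" unfolding smooth_def by blast
  then show ?thesis by (simp add: differentiable_on_def)
qed

lemma smooth_cont: "smooth \<eta> \<Longrightarrow> continuous_on UNIV \<eta>"
proof -
  assume "smooth \<eta>"
  then have "(foldr partial [] \<eta>) differentiable_on UNIV" unfolding smooth_def by blast
  then show ?thesis using differentiable_imp_continuous_on by auto
qed

lemma smooth_partial_cont: "smooth \<eta> \<Longrightarrow> continuous_on UNIV (partial i \<eta>)"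
proof -
  assume "smooth \<eta>"
  then have "(foldr partial [i] \<eta>) differentiable_on UNIV" unfolding smooth_def by blast
  then show ?thesis using differentiable_imp_continuous_on by auto
qed

lemma partial_eq_deriv:
  assumes D: "(\<eta> has_derivative D) (at y)"
  shows "partial i \<eta> y = D (axis i 1)"
proof -
  have lin: "linear D" using D has_derivative_linear by blast
  have "((\<lambda>t::real. y + t *\<^sub>R axis i 1) has_derivative (\<lambda>t. t *\<^sub>R axis i 1)) (at 0)"
    by (auto intro!: derivative_eq_intros)
  moreover have "(\<eta> has_derivative D) (at ((\<lambda>t::real. y + t *\<^sub>R axis i 1) 0))" using D by simp
  ultimately have "((\<eta> \<circ> (\<lambda>t::real. y + t *\<^sub>R axis i 1)) has_derivative (D \<circ> (\<lambda>t. t *\<^sub>R axis i 1))) (at 0)"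
    by (rule diff_chain_at)
  then have "((\<lambda>t. \<eta> (y + t *\<^sub>R axis i 1)) has_derivative (\<lambda>t. D (t *\<^sub>R axis i 1))) (at 0)"
    by (simp add: o_def)
  then have "((\<lambda>t. \<eta> (y + t *\<^sub>R axis i 1)) has_field_derivative D (axis i 1)) (at 0)"
    by (rule has_derivative_imp_has_field_derivative) (simp add: linear_scale[OF lin])
  then show ?thesis unfolding partial_def by (rule DERIV_imp_deriv)
qed

lemma deriv_inner:
  assumes D: "(\<eta> has_derivative D) (at y)"
  shows "D h = (\<chi> i. partial i \<eta> y) \<bullet> h"
proof -
  have lin: "linear D" using D has_derivative_linear by blast
  have "D h = D (\<Sum>i\<in>UNIV. (h$i) *\<^sub>R axis i 1)"
    using basis_expansion[of h] by (simp add: scalar_mult_eq_scaleR)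
  also have "\<dots> = (\<Sum>i\<in>UNIV. (h$i) * D (axis i 1))"
    by (simp add: linear_sum[OF lin] linear_scale[OF lin])
  also have "\<dots> = (\<chi> i. partial i \<eta> y) \<bullet> h"
    by (simp add: inner_vec_def partial_eq_deriv[OF D] mult.commute)
  finally show ?thesis .
qed

lemma sup_ball_finite:
  fixes g :: "R3 \<Rightarrow> real"
  assumes "continuous_on UNIV g"
  shows "\<exists>M\<ge>0. (SUP x\<in>ball x0 r. ennreal (g x)) = ennreal M \<and> (\<forall>x\<in>ball x0 r. g x \<le> M)"
proof -
  have "compact (g ` cball x0 r)"
    by (rule compact_continuous_image) (use assms continuous_on_subset in auto)
  then obtain B where B: "\<forall>y\<in>g ` cball x0 r. norm y \<le> B"
    using compact_imp_bounded bounded_iff by metis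
  have "(SUP x\<in>ball x0 r. ennreal (g x)) \<le> ennreal B"
  proof (rule SUP_least)
    fix x assume "x \<in> ball x0 r"
    then have "x \<in> cball x0 r" by auto
    then have "norm (g x) \<le> B" using B by blast
    then have "g x \<le> B" by simp
    then show "ennreal (g x) \<le> ennreal B" by (simp add: ennreal_leI)
  qed
  then have fin: "(SUP x\<in>ball x0 r. ennreal (g x)) \<noteq> top"
    using ennreal_neq_top neq_top_trans by blast
  define M where "M = enn2real (SUP x\<in>ball x0 r. ennreal (g x))"
  have eq: "(SUP x\<in>ball x0 r. ennreal (g x)) = ennreal M"
    unfolding M_def using fin by (metis ennreal_enn2real less_top)
  have M0: "M \<ge> 0" by (simp add: M_def)
  have "g x \<le> M" if "x \<in> ball x0 r" for x
  proof -
    have "ennreal (g x) \<le> ennreal M" using eq SUP_upper[OF that, of "\<lambda>x. ennreal (g x)"] by simp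
    then show ?thesis using M0 by simp
  qed
  then show ?thesis using eq M0 by blast
qed

lemma eta_facts:
  assumes eta: "\<eta> \<in> C0_inf (ball x0 r)"
  shows eta_zero: "\<And>x. x \<notin> ball x0 r \<Longrightarrow> \<eta> x = 0"
    and eta_M: "\<exists>M\<ge>0. sup_norm \<eta> (ball x0 r) = ennreal M \<and> (\<forall>x. \<bar>\<eta> x\<bar> \<le> M)"
    and eta_L: "\<exists>L\<ge>0. grad_sup_norm \<eta> (ball x0 r) = ennreal L \<and> (\<forall>x y. \<bar>\<eta> x - \<eta> y\<bar> \<le> L * norm (x - y))"
    and eta_cont: "continuous_on UNIV \<eta>"
proof -
  define K where "K = closure {x. \<eta> x \<noteq> 0}"
  have sm: "smooth \<eta>" and KB: "K \<subseteq> ball x0 r" using eta by (auto simp: C0_inf_def K_def)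
  have zK: "\<eta> x = 0" if "x \<notin> K" for x
  proof (rule ccontr)
    assume "\<eta> x \<noteq> 0"
    then have "x \<in> {x. \<eta> x \<noteq> 0}" by simp
    then have "x \<in> K" unfolding K_def by (rule closure_subset[THEN subsetD])
    then show False using that by blast
  qed
  show z: "\<eta> x = 0" if "x \<notin> ball x0 r" for x
    by (rule zK) (use KB that in \<open>meson subsetD\<close>)
  show "continuous_on UNIV \<eta>" using sm by (rule smooth_cont)
  have c1: "continuous_on UNIV (\<lambda>x. \<bar>\<eta> x\<bar>)"
    using smooth_cont[OF sm] by (intro continuous_intros)
  from sup_ball_finite[OF c1, of x0 r] obtain M where M: "M \<ge> 0"
     "(SUP x\<in>ball x0 r. ennreal \<bar>\<eta> x\<bar>) = ennreal M" "\<forall>x\<in>ball x0 r. \<bar>\<eta> x\<bar> \<le> M"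
    by blast
  have "\<bar>\<eta> x\<bar> \<le> M" for x using M(3) z[of x] M(1) by (cases "x \<in> ball x0 r") auto
  then have "\<forall>x. \<bar>\<eta> x\<bar> \<le> M" by blast
  moreover have "sup_norm \<eta> (ball x0 r) = ennreal M" using M(2) by (simp add: sup_norm_def)
  ultimately show "\<exists>M\<ge>0. sup_norm \<eta> (ball x0 r) = ennreal M \<and> (\<forall>x. \<bar>\<eta> x\<bar> \<le> M)" using M(1) by blast
  define G where "G y = (\<chi> i. partial i \<eta> y)" for y
  have c2: "continuous_on UNIV (\<lambda>y. norm (G y))"
    unfolding G_def using smooth_partial_cont[OF sm] by (intro continuous_intros) auto
  from sup_ball_finite[OF c2, of x0 r] obtain L where L: "L \<ge> 0"
     "(SUP x\<in>ball x0 r. ennreal (norm (G x))) = ennreal L" "\<forall>x\<in>ball x0 r. norm (G x) \<le> L"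
    by blast
  have L2: "grad_sup_norm \<eta> (ball x0 r) = ennreal L" using L(2) by (simp add: grad_sup_norm_def G_def)
  have Dw: "(\<eta> has_derivative frechet_derivative \<eta> (at y)) (at y)" for y
    using smooth_diff[OF sm] frechet_derivative_works by blast
  have G0: "G y = 0" if "y \<notin> ball x0 r" for y
  proof -
    have yK: "y \<in> - K" using that KB by blast
    have "((\<lambda>_. 0::real) has_derivative (\<lambda>_. 0)) (at y)" by simp
    moreover have "open (- K)" unfolding K_def by (intro open_Compl closed_closure)
    moreover have "\<And>x. x \<in> - K \<Longrightarrow> 0 = \<eta> x" using zK by simp
    ultimately have D0: "(\<eta> has_derivative (\<lambda>_. 0)) (at y)"
      by (rule has_derivative_transform_within_open[OF _ _ yK])
    show ?thesis unfolding G_def vec_eq_iff using partial_eq_deriv[OF D0] by simp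
  qed
  have GL: "norm (G y) \<le> L" for y using L G0 by (cases "y \<in> ball x0 r") auto
  have on: "onorm (frechet_derivative \<eta> (at y)) \<le> L" for y
  proof (rule onorm_le)
    fix h
    have "norm (frechet_derivative \<eta> (at y) h) = \<bar>G y \<bullet> h\<bar>"
      using deriv_inner[OF Dw] by (simp add: G_def)
    also have "\<dots> \<le> norm (G y) * norm h" by (rule Cauchy_Schwarz_ineq2)
    also have "\<dots> \<le> L * norm h" using GL by (simp add: mult_right_mono)
    finally show "norm (frechet_derivative \<eta> (at y) h) \<le> L * norm h" .
  qed
  have "norm (\<eta> x - \<eta> y) \<le> L * norm (x - y)" for x y
    by (rule differentiable_bound[where S=UNIV and f'="\<lambda>y. frechet_derivative \<eta> (at y)"]) (use Dw on in auto)
  then have "\<bar>\<eta> x - \<eta> y\<bar> \<le> L * norm (x - y)" for x y by simp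
  then show "\<exists>L\<ge>0. grad_sup_norm \<eta> (ball x0 r) = ennreal L \<and> (\<forall>x y. \<bar>\<eta> x - \<eta> y\<bar> \<le> L * norm (x - y))"
    using L(1) L2 by blast
qed

lemma ennsqrt_ennreal: "0 \<le> x \<Longrightarrow> ennsqrt (ennreal x) = ennreal (sqrt x)"
  by (simp add: ennsqrt_def)

lemma ennsqrt_top[simp]: "ennsqrt top = top"
  by (simp add: ennsqrt_def)

lemma ennsqrt_mono: "a \<le> b \<Longrightarrow> ennsqrt a \<le> ennsqrt b"
proof (cases "b = top")
  case True then show ?thesis by simp
next
  case False
  assume ab: "a \<le> b"
  then have "a \<noteq> top" using False top_unique by blast
  then obtain x y where "a = ennreal x" "b = ennreal y" "0 \<le> x" "0 \<le> y"
    using False by (metis ennreal_cases ennreal_enn2real_if enn2real_nonneg)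
  then show ?thesis using ab by (auto simp: ennsqrt_ennreal)
qed

lemma part1:
  fixes \<Omega> :: "R3 set" and f :: "R3 \<Rightarrow> real"
  assumes eta: "\<eta> \<in> C0_inf (ball x0 r)" and f: "f \<in> borel_measurable lborel"
  shows "Hneg_norm (\<lambda>x. \<eta> x * f x) \<Omega> s
         \<le> ennreal 1 * sup_norm \<eta> (ball x0 r) * L2_norm f (ball x0 r)"
proof -
  obtain M where M: "M \<ge> 0" "sup_norm \<eta> (ball x0 r) = ennreal M" "\<forall>x. \<bar>\<eta> x\<bar> \<le> M"
    using eta_M[OF eta] by blast
  have z: "\<And>x. x \<notin> ball x0 r \<Longrightarrow> \<eta> x = 0" using eta_zero[OF eta] by blast
  define B where "B = ball x0 r"
  define Pf where "Pf = L2_sq f B"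
  have Bm[measurable]: "B \<in> sets borel" by (simp add: B_def)
  note f[measurable]
  show ?thesis unfolding Hneg_norm_def
  proof (rule SUP_least)
    fix u assume u: "u \<in> {u \<in> Htilde s \<Omega>. Hs_norm u UNIV s \<noteq> 0}"
    have um: "u \<in> borel_measurable lborel" and ufin: "Hs_norm u UNIV s < \<infinity>"
      and u0: "Hs_norm u UNIV s \<noteq> 0" using u by (auto simp: Htilde_def)
    note um[measurable]
    define Pu where "Pu = L2_sq u UNIV"
    define I where "I = (\<integral>\<^sup>+x. (ennreal \<bar>f x\<bar> * indicator B x) * ennreal \<bar>u x\<bar> \<partial>lborel)"
    have lint: "ennreal \<bar>LINT x:\<Omega>|lborel. \<eta> x * f x * u x\<bar> \<le> ennreal M * I"
    proof (cases "integrable lborel (\<lambda>x. indicator \<Omega> x *\<^sub>R (\<eta> x * f x * u x))")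
      case True
      have "ennreal \<bar>LINT x:\<Omega>|lborel. \<eta> x * f x * u x\<bar>
          \<le> (\<integral>\<^sup>+x. ennreal (norm (indicator \<Omega> x *\<^sub>R (\<eta> x * f x * u x))) \<partial>lborel)"
        using integral_norm_bound_ennreal[OF True] by (simp add: set_lebesgue_integral_def)
      also have "\<dots> \<le> (\<integral>\<^sup>+x. ennreal M * ((ennreal \<bar>f x\<bar> * indicator B x) * ennreal \<bar>u x\<bar>) \<partial>lborel)"
      proof (rule nn_integral_mono)
        fix x
        show "ennreal (norm (indicator \<Omega> x *\<^sub>R (\<eta> x * f x * u x)))
            \<le> ennreal M * ((ennreal \<bar>f x\<bar> * indicator B x) * ennreal \<bar>u x\<bar>)"
        proof (cases "x \<in> B")
          case True
          have "norm (indicator \<Omega> x *\<^sub>R (\<eta> x * f x * u x)) \<le> \<bar>\<eta> x\<bar> * \<bar>f x\<bar> * \<bar>u x\<bar>"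
            by (auto simp: indicator_def abs_mult)
          also have "\<dots> \<le> M * \<bar>f x\<bar> * \<bar>u x\<bar>"
            using M(3) by (intro mult_right_mono) auto
          finally show ?thesis using True M(1)
            by (simp add: ennreal_mult'[symmetric] mult.assoc)
        next
          case False
          then show ?thesis using z[of x] by (simp add: B_def)
        qed
      qed
      also have "\<dots> = ennreal M * I" unfolding I_def
        by (rule nn_integral_cmult) measurable
      finally show ?thesis .
    next
      case False
      then show ?thesis by (simp add: set_lebesgue_integral_def not_integrable_integral_eq)
    qed
    have cs: "I\<^sup>2 \<le> Pf * Pu"
    proof -
      have "I\<^sup>2 \<le> (\<integral>\<^sup>+x. (ennreal \<bar>f x\<bar> * indicator B x)^2 \<partial>lborel) * (\<integral>\<^sup>+x. (ennreal \<bar>u x\<bar>)^2 \<partial>lborel)"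
        unfolding I_def by (rule Cauchy_Schwarz_nn_integral) measurable
      also have "(\<integral>\<^sup>+x. (ennreal \<bar>f x\<bar> * indicator B x)^2 \<partial>lborel) = Pf"
        unfolding Pf_def L2_sq_def
        by (rule nn_integral_cong) (auto simp: indicator_def ennreal_power)
      also have "(\<integral>\<^sup>+x. (ennreal \<bar>u x\<bar>)^2 \<partial>lborel) = Pu"
        unfolding Pu_def L2_sq_def
        by (rule nn_integral_cong) (auto simp: ennreal_power)
      finally show ?thesis .
    qed
    show "ennreal \<bar>LINT x:\<Omega>|lborel. \<eta> x * f x * u x\<bar> / Hs_norm u UNIV s
        \<le> ennreal 1 * sup_norm \<eta> (ball x0 r) * L2_norm f (ball x0 r)"
    proof -
      define Su where "Su = Hs_semi_sq u UNIV s"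
      have N: "Hs_norm u UNIV s = ennsqrt (Pu + Su)" by (simp add: Hs_norm_def Pu_def Su_def)
      have "Pu + Su \<noteq> top" using ufin N by auto
      then obtain w where w: "Pu + Su = ennreal w" "0 \<le> w" by (metis ennreal_cases)
      have PuT: "Pu \<noteq> top" using \<open>Pu + Su \<noteq> top\<close> by auto
      then obtain pu where pu: "Pu = ennreal pu" "0 \<le> pu" by (metis ennreal_cases)
      have "ennsqrt Pu \<le> ennsqrt (Pu + Su)" by (rule ennsqrt_mono) simp
      then have pun: "sqrt pu \<le> sqrt w" using pu w by (simp add: ennsqrt_ennreal)
      have Nw: "Hs_norm u UNIV s = ennreal (sqrt w)" using N w by (simp add: ennsqrt_ennreal)
      have w0: "0 < sqrt w" using u0 Nw w(2) by (auto simp: less_le)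
      have R: "ennreal 1 * sup_norm \<eta> (ball x0 r) * L2_norm f (ball x0 r) = ennreal M * ennsqrt Pf"
        by (simp add: M(2) L2_norm_def Pf_def B_def)
      show ?thesis
      proof (cases "M = 0")
        case True
        then have "ennreal \<bar>LINT x:\<Omega>|lborel. \<eta> x * f x * u x\<bar> = 0" using lint by simp
        then show ?thesis by simp
      next
        case Mpos: False
        show ?thesis
        proof (cases "Pf = top")
          case True
          then show ?thesis unfolding R using Mpos M(1) by simp
        next
          case False
          then obtain pf where pf: "Pf = ennreal pf" "0 \<le> pf" by (metis ennreal_cases)
          have "I\<^sup>2 \<le> ennreal (pf * pu)" using cs pf pu by (simp add: ennreal_mult)
          then have "I \<noteq> top"
          proof (intro notI)
            assume a: "I\<^sup>2 \<le> ennreal (pf * pu)" and "I = top"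
            then have "I\<^sup>2 = top" by (simp add: power2_eq_square)
            then show False using a by (simp add: top_unique)
          qed
          then obtain i where i: "I = ennreal i" "0 \<le> i" by (metis ennreal_cases)
          have "ennreal (i\<^sup>2) \<le> ennreal (pf * pu)" using cs pf pu i by (simp add: ennreal_mult ennreal_power)
          then have "i\<^sup>2 \<le> pf * pu" using pf pu by (simp add: mult_nonneg_nonneg)
          then have "sqrt (i\<^sup>2) \<le> sqrt (pf * pu)" by (rule real_sqrt_le_mono)
          then have ii: "i \<le> sqrt pf * sqrt pu" using i(2) by (simp add: real_sqrt_mult)
          have "ennreal \<bar>LINT x:\<Omega>|lborel. \<eta> x * f x * u x\<bar> / Hs_norm u UNIV s
              \<le> ennreal (M * i) / ennreal (sqrt w)"
            unfolding Nw by (rule divide_right_mono_ennreal) (use lint i M(1) in \<open>simp add: ennreal_mult\<close>)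
          also have "\<dots> = ennreal (M * i / sqrt w)" using w0 i M(1) by (simp add: divide_ennreal)
          also have "\<dots> \<le> ennreal (M * sqrt pf)"
          proof (rule ennreal_leI)
            have "sqrt pf * sqrt pu \<le> sqrt pf * sqrt w" using pun pf(2) by (intro mult_left_mono) auto
            then have "M * i \<le> M * (sqrt pf * sqrt w)"
              using ii M(1) by (intro mult_left_mono) auto
            then show "M * i / sqrt w \<le> M * sqrt pf" using w0 by (simp add: divide_simps mult_ac)
          qed
          also have "\<dots> = ennreal M * ennsqrt Pf" using pf M(1) by (simp add: ennsqrt_ennreal ennreal_mult)
          finally show ?thesis unfolding R .
        qed
      qed
    qed
  qed
qed

lemma sq_le_M: "\<bar>a::real\<bar> \<le> M \<Longrightarrow> a\<^sup>2 \<le> M\<^sup>2"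
  by (metis abs_ge_zero abs_le_square_iff order.trans abs_of_nonneg)

lemma sq_sum_le: "((a::real) + b)\<^sup>2 \<le> 2 * a\<^sup>2 + 2 * b\<^sup>2"
proof -
  have "2 * a\<^sup>2 + 2 * b\<^sup>2 - (a + b)\<^sup>2 = (a - b)\<^sup>2" by (simp add: power2_eq_square algebra_simps)
  then show ?thesis using zero_le_power2[of "a - b"] by linarith
qed

lemma pt_bound:
  fixes x0 x z :: R3 and f \<eta> :: "R3 \<Rightarrow> real"
  assumes R: "0 < R" and c: "0 < c" "c < 1" and b: "0 < b" and M: "\<forall>y. \<bar>\<eta> y\<bar> \<le> M"
    and z0: "\<And>y. y \<notin> ball x0 (c*R) \<Longrightarrow> \<eta> y = 0"
  shows "(\<eta> x * f x - \<eta> z * f z)\<^sup>2 / norm (x - z) powr b \<le>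
      2 * M\<^sup>2 * (indicator (ball x0 R) x * indicator (ball x0 R) z * (f x - f z)\<^sup>2 / norm (x - z) powr b)
    + 2 * (indicator (ball x0 R) x * (f x)\<^sup>2) * (indicator (ball x0 R) z * (\<eta> x - \<eta> z)\<^sup>2 / norm (x - z) powr b)
    + M\<^sup>2 * (1 - c) powr (-b) * (indicator (ball x0 R) z * (f z)\<^sup>2) * (if R \<le> norm (x0 - x) then norm (x0 - x) powr (-b) else 0)
    + M\<^sup>2 * (indicator (ball x0 R) x * (f x)\<^sup>2) * (if (1 - c) * R \<le> norm (x - z) then norm (x - z) powr (-b) else 0)"
  (is "?L \<le> ?T1 + ?T2 + ?T3 + ?T4")
proof -
  define D where "D = norm (x - z) powr b"
  have D0: "0 \<le> D" by (simp add: D_def)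
  have M0: "0 \<le> M" using M by (meson abs_ge_zero order.trans)
  have T1: "0 \<le> ?T1" and T2: "0 \<le> ?T2" and T3: "0 \<le> ?T3" and T4: "0 \<le> ?T4"
    by (intro mult_nonneg_nonneg divide_nonneg_nonneg; simp)+
  have cRsub: "ball x0 (c*R) \<subseteq> ball x0 R" using c R by (intro subset_ball) simp
  show ?thesis
  proof (cases "x \<in> ball x0 R")
    case xB: True
    show ?thesis
    proof (cases "z \<in> ball x0 R")
      case zB: True
      have e: "\<eta> x * f x - \<eta> z * f z = \<eta> z * (f x - f z) + f x * (\<eta> x - \<eta> z)" by algebra
      have "(\<eta> x * f x - \<eta> z * f z)\<^sup>2 \<le> 2 * (\<eta> z * (f x - f z))\<^sup>2 + 2 * (f x * (\<eta> x - \<eta> z))\<^sup>2"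
        unfolding e by (rule sq_sum_le)
      also have "\<dots> \<le> 2 * M\<^sup>2 * (f x - f z)\<^sup>2 + 2 * (f x)\<^sup>2 * (\<eta> x - \<eta> z)\<^sup>2"
        using sq_le_M[of "\<eta> z" M] M by (simp add: power_mult_distrib mult_right_mono)
      finally have "?L \<le> (2 * M\<^sup>2 * (f x - f z)\<^sup>2 + 2 * (f x)\<^sup>2 * (\<eta> x - \<eta> z)\<^sup>2) / D"
        unfolding D_def by (rule divide_right_mono) simp
      also have "\<dots> = ?T1 + ?T2"
      proof -
        have i1: "indicator (ball x0 R) x = (1::real)" using xB by simp
        have i2: "indicator (ball x0 R) z = (1::real)" using zB by simp
        show ?thesis unfolding i1 i2 D_def[symmetric] by (simp add: add_divide_distrib)
      qed
      finally show ?thesis using T3 T4 by linarith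
    next
      case zB: False
      have gz: "\<eta> z = 0" using zB cRsub z0 by blast
      show ?thesis
      proof (cases "x \<in> ball x0 (c*R)")
        case False
        then have "\<eta> x = 0" using z0 by blast
        then have "?L = 0" using gz by simp
        then show ?thesis using T1 T2 T3 T4 by linarith
      next
        case xB': True
        have "norm (x0 - z) \<ge> R" using zB by (simp add: dist_norm)
        moreover have "norm (x0 - x) < c * R" using xB' by (simp add: dist_norm)
        moreover have "norm (x0 - z) \<le> norm (x0 - x) + norm (x - z)"
          using norm_triangle_ineq[of "x0 - x" "x - z"] by simp
        ultimately have dz: "(1 - c) * R \<le> norm (x - z)" by (simp add: algebra_simps)
        have dpos: "0 < norm (x - z)" using dz c R by (smt (verit) mult_pos_pos)
        have "?L = (\<eta> x)\<^sup>2 * (f x)\<^sup>2 / D" using gz by (simp add: D_def power_mult_distrib)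
        also have "\<dots> \<le> M\<^sup>2 * (f x)\<^sup>2 / D"
          using sq_le_M[of "\<eta> x" M] M D0 by (intro divide_right_mono mult_right_mono) auto
        also have "\<dots> = M\<^sup>2 * (f x)\<^sup>2 * norm (x - z) powr (-b)"
          using dpos by (simp add: D_def powr_minus divide_inverse)
        also have "\<dots> = ?T4" using xB dz by simp
        finally show ?thesis using T1 T2 T3 by linarith
      qed
    qed
  next
    case xB: False
    have gx: "\<eta> x = 0" using xB cRsub z0 by blast
    show ?thesis
    proof (cases "z \<in> ball x0 (c*R)")
      case False
      then have "\<eta> z = 0" using z0 by blast
      then have "?L = 0" using gx by simp
      then show ?thesis using T1 T2 T3 T4 by linarith
    next
      case zB': True
      have zB: "z \<in> ball x0 R" using zB' cRsub by blast
      have d0: "norm (x0 - x) \<ge> R" using xB by (simp add: dist_norm)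
      have "norm (x0 - z) < c * R" using zB' by (simp add: dist_norm)
      moreover have "norm (x0 - x) \<le> norm (x0 - z) + norm (z - x)"
        using norm_triangle_ineq[of "x0 - z" "z - x"] by simp
      moreover have "c * R \<le> c * norm (x0 - x)" using d0 c by simp
      ultimately have dz: "(1 - c) * norm (x0 - x) \<le> norm (x - z)" by (simp add: algebra_simps norm_minus_commute)
      have p: "0 < (1 - c) * norm (x0 - x)" using d0 c R by (intro mult_pos_pos) auto
      have Dge: "D \<ge> ((1 - c) * norm (x0 - x)) powr b" unfolding D_def
        using dz p b by (intro powr_mono2) auto
      then have Dpos: "D > 0" using p by (smt (verit) powr_gt_zero)
      have "?L = (\<eta> z)\<^sup>2 * (f z)\<^sup>2 / D" using gx by (simp add: D_def power_mult_distrib)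
      also have "\<dots> \<le> M\<^sup>2 * (f z)\<^sup>2 / D"
        using sq_le_M[of "\<eta> z" M] M D0 by (intro divide_right_mono mult_right_mono) auto
      also have "\<dots> \<le> M\<^sup>2 * (f z)\<^sup>2 / ((1 - c) * norm (x0 - x)) powr b"
        using Dge p Dpos by (intro divide_left_mono) (auto intro!: mult_pos_pos)
      also have "\<dots> = M\<^sup>2 * (1 - c) powr (-b) * (f z)\<^sup>2 * norm (x0 - x) powr (-b)"
        using p c by (simp add: powr_mult powr_minus divide_inverse)
      also have "\<dots> = ?T3" using zB d0 by simp
      finally show ?thesis using T1 T2 T4 by linarith
    qed
  qed
qed

lemma pt_bound_enn:
  fixes x0 x z :: R3 and f \<eta> :: "R3 \<Rightarrow> real"
  assumes R: "0 < R" and c: "0 < c" "c < 1" and b: "0 < b" and M: "\<forall>y. \<bar>\<eta> y\<bar> \<le> M"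
    and z0: "\<And>y. y \<notin> ball x0 (c*R) \<Longrightarrow> \<eta> y = 0"
  shows "ennreal ((\<eta> x * f x - \<eta> z * f z)\<^sup>2 / norm (x - z) powr b) \<le>
      ennreal (2 * M\<^sup>2 * (indicator (ball x0 R) x * indicator (ball x0 R) z * (f x - f z)\<^sup>2 / norm (x - z) powr b))
    + ennreal (2 * (indicator (ball x0 R) x * (f x)\<^sup>2) * (indicator (ball x0 R) z * (\<eta> x - \<eta> z)\<^sup>2 / norm (x - z) powr b))
    + ennreal (M\<^sup>2 * (1 - c) powr (-b) * (indicator (ball x0 R) z * (f z)\<^sup>2) * (if R \<le> norm (x0 - x) then norm (x0 - x) powr (-b) else 0))
    + ennreal (M\<^sup>2 * (indicator (ball x0 R) x * (f x)\<^sup>2) * (if (1 - c) * R \<le> norm (x - z) then norm (x - z) powr (-b) else 0))"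
  (is "_ \<le> ennreal ?T1 + ennreal ?T2 + ennreal ?T3 + ennreal ?T4")
proof -
  have M0: "0 \<le> M" using M by (meson abs_ge_zero order.trans)
  have T1: "0 \<le> ?T1" and T2: "0 \<le> ?T2" and T3: "0 \<le> ?T3" and T4: "0 \<le> ?T4"
    by (intro mult_nonneg_nonneg divide_nonneg_nonneg; simp)+
  have "ennreal ((\<eta> x * f x - \<eta> z * f z)\<^sup>2 / norm (x - z) powr b) \<le> ennreal (?T1 + ?T2 + ?T3 + ?T4)"
    by (rule ennreal_leI, rule pt_bound[OF R c b M z0]) auto
  also have "\<dots> = ennreal ?T1 + ennreal ?T2 + ennreal ?T3 + ennreal ?T4"
    using T1 T2 T3 T4 by (simp add: ennreal_plus[symmetric] del: ennreal_plus)
  finally show ?thesis .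
qed

lemma pt_eta:
  fixes x z :: R3 and \<eta> :: "R3 \<Rightarrow> real"
  assumes R: "0 < R" and b: "2 < b" and M: "\<forall>y. \<bar>\<eta> y\<bar> \<le> M"
    and L: "0 \<le> L" "\<forall>x y. \<bar>\<eta> x - \<eta> y\<bar> \<le> L * norm (x - y)"
  shows "indicator B z * (\<eta> x - \<eta> z)\<^sup>2 / norm (x - z) powr b \<le>
     L\<^sup>2 * (if 0 < norm (x - z) \<and> norm (x - z) < R then norm (x - z) powr (-(b - 2)) else 0)
   + 4 * M\<^sup>2 * (if R \<le> norm (x - z) then norm (x - z) powr (-b) else 0)"
proof -
  define d where "d = norm (x - z)"
  have M0: "0 \<le> M" using M by (meson abs_ge_zero order.trans)
  have ind: "(0::real) \<le> indicator B z" "indicator B z \<le> (1::real)" by (auto simp: indicator_def)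
  have r0: "0 \<le> L\<^sup>2 * (if 0 < d \<and> d < R then d powr (-(b - 2)) else 0)" by simp
  have r1: "0 \<le> 4 * M\<^sup>2 * (if R \<le> d then d powr (-b) else 0)" by simp
  have lhs: "indicator B z * (\<eta> x - \<eta> z)\<^sup>2 / d powr b \<le> (\<eta> x - \<eta> z)\<^sup>2 / d powr b"
    using ind by (intro divide_right_mono mult_left_le_one_le) auto
  have main: "indicator B z * (\<eta> x - \<eta> z)\<^sup>2 / d powr b \<le>
     L\<^sup>2 * (if 0 < d \<and> d < R then d powr (-(b - 2)) else 0)
   + 4 * M\<^sup>2 * (if R \<le> d then d powr (-b) else 0)"
  proof (cases "d = 0")
    case True
    then show ?thesis using r0 r1 by simp
  next
    case False
    then have dpos: "0 < d" by (simp add: d_def)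
    show ?thesis
    proof (cases "d < R")
      case True
      have "(\<eta> x - \<eta> z)\<^sup>2 \<le> (L * d)\<^sup>2"
        using L(2) L(1) dpos unfolding d_def by (intro sq_le_M) (auto simp: abs_le_iff)
      then have "(\<eta> x - \<eta> z)\<^sup>2 / d powr b \<le> (L * d)\<^sup>2 / d powr b"
        by (rule divide_right_mono) simp
      also have "\<dots> = L\<^sup>2 * d powr (-(b - 2))"
      proof -
        have "d powr (-(b - 2)) = d\<^sup>2 / d powr b"
          using dpos by (simp add: powr_minus_divide powr_diff powr_realpow[symmetric] flip: powr_numeral)
        then show ?thesis by (simp add: power_mult_distrib)
      qed
      finally show ?thesis using lhs r1 True dpos by simp
    next
      case False
      have "\<bar>\<eta> x\<bar> \<le> M" "\<bar>\<eta> z\<bar> \<le> M" using M by auto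
      then have "\<bar>\<eta> x - \<eta> z\<bar> \<le> 2 * M" by linarith
      then have "(\<eta> x - \<eta> z)\<^sup>2 \<le> (2 * M)\<^sup>2" by (rule sq_le_M)
      then have "(\<eta> x - \<eta> z)\<^sup>2 / d powr b \<le> (2 * M)\<^sup>2 / d powr b"
        by (rule divide_right_mono) simp
      also have "\<dots> = 4 * M\<^sup>2 * d powr (-b)"
        using dpos by (simp add: powr_minus divide_inverse power_mult_distrib)
      finally show ?thesis using lhs r0 False by simp
    qed
  qed
  then show ?thesis unfolding d_def .
qed

lemma enn_fact1:
  assumes "0 \<le> a" "0 \<le> s" "0 \<le> D"
  shows "ennreal (a * (indicator A x * indicator C z * s / D)) = ennreal (a * indicator A x) * (ennreal (s / D) * indicator C z)"
proof (cases "x \<in> A \<and> z \<in> C")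
  case True
  then show ?thesis using ennreal_mult'[of a "s / D"] assms by simp
next
  case False
  then show ?thesis by auto
qed

lemma enn_fact2:
  assumes "0 \<le> a" "0 \<le> s" "0 \<le> I"
  shows "ennreal (a * (indicator C z * s) * I) = ennreal (a * I) * (ennreal s * indicator C z)"
proof (cases "z \<in> C")
  case True
  then show ?thesis using ennreal_mult'[of "a * I" s] assms by (simp add: mult_ac)
next
  case False
  then show ?thesis by auto
qed

lemma enn_sum4: "0 \<le> a1 \<Longrightarrow> 0 \<le> a2 \<Longrightarrow> 0 \<le> a3 \<Longrightarrow> 0 \<le> a4 \<Longrightarrow>
  ennreal (a1 + a2 + a3 + a4) = ennreal a1 + ennreal a2 + ennreal a3 + ennreal a4"
  by simp

lemma part2_sq:
  fixes f \<eta> :: "R3 \<Rightarrow> real" and x0 :: R3 and \<Omega> :: "R3 set"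
  assumes R: "0 < R" and c: "0 < c" "c < 1" and t: "0 < t" "t < 1"
    and f[measurable]: "f \<in> borel_measurable lborel" and \<Omega>m[measurable]: "\<Omega> \<in> sets borel"
    and M: "0 \<le> M" "\<forall>y. \<bar>\<eta> y\<bar> \<le> M" and L: "0 \<le> L" "\<forall>x y. \<bar>\<eta> x - \<eta> y\<bar> \<le> L * norm (x - y)"
    and z0: "\<And>y. y \<notin> ball x0 (c*R) \<Longrightarrow> \<eta> y = 0"
    and etam[measurable]: "\<eta> \<in> borel_measurable lborel"
  defines "b \<equiv> 3 + 2 * t"
  defines "Kn \<equiv> 2 powr (b - 2) * unit_ball_vol 3 / (1 - (1/2) powr (3 - (b - 2)))"
  defines "Kf \<equiv> 8 * unit_ball_vol 3 / (1 - 2 powr (3 - b))"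
  defines "E \<equiv> L\<^sup>2 * (Kn * R powr (3 - (b - 2))) + 4 * M\<^sup>2 * (Kf * R powr (3 - b))"
  defines "Kp \<equiv> M\<^sup>2 + 2 * E + M\<^sup>2 * (1 - c) powr (-b) * (Kf * R powr (3 - b)) + M\<^sup>2 * (Kf * ((1 - c) * R) powr (3 - b))"
  shows "L2_sq (\<lambda>x. \<eta> x * f x) \<Omega> + Hs_semi_sq (\<lambda>x. \<eta> x * f x) \<Omega> t
     \<le> ennreal (2 * M\<^sup>2) * Hs_semi_sq f (ball x0 R) t + ennreal Kp * L2_sq f (ball x0 R)"
proof -
  define B where "B = ball x0 R"
  have Bm[measurable]: "B \<in> sets borel" by (simp add: B_def)
  have b: "3 < b" "b < 5" "2 < b" "0 < b" using t by (simp_all add: b_def)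
  have V0: "0 \<le> unit_ball_vol 3" by simp
  have q1: "(1/2::real) powr (3 - (b - 2)) < 1" using b by (intro half_lt) simp
  have q2: "(2::real) powr (3 - b) < 1" using b by (intro powr_less_one) simp_all
  have Kn0: "0 \<le> Kn" unfolding Kn_def using q1 V0 by (intro divide_nonneg_pos mult_nonneg_nonneg) simp_all
  have Kf0: "0 \<le> Kf" unfolding Kf_def using q2 V0 by (intro divide_nonneg_pos mult_nonneg_nonneg) simp_all
  have E0: "0 \<le> E" unfolding E_def using Kn0 Kf0 by (intro add_nonneg_nonneg mult_nonneg_nonneg) simp_all
  define P where "P = L2_sq f B"
  define S where "S = Hs_semi_sq f B t"
  define Sf where "Sf x = (\<integral>\<^sup>+z. ennreal ((f x - f z)\<^sup>2 / norm (x - z) powr b) * indicator B z \<partial>lborel)" for x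
  have S_eq: "S = (\<integral>\<^sup>+x. Sf x * indicator B x \<partial>lborel)" by (simp add: S_def Sf_def Hs_semi_sq_def b_def)
  have P_eq: "P = (\<integral>\<^sup>+x. ennreal ((f x)\<^sup>2) * indicator B x \<partial>lborel)" by (simp add: P_def L2_sq_def)
  have Sfm[measurable]: "Sf \<in> borel_measurable lborel"
  proof -
    have "(\<lambda>(x, z). ennreal ((f x - f z)\<^sup>2 / norm (x - z) powr b) * indicator B z) \<in> borel_measurable (lborel \<Otimes>\<^sub>M lborel)"
      by measurable
    then show ?thesis unfolding Sf_def by (rule lborel.borel_measurable_nn_integral)
  qed
  have far: "(\<integral>\<^sup>+z. ennreal (if \<rho> \<le> norm (y - z) then norm (y - z) powr (-b) else 0) \<partial>lborel)
      \<le> ennreal (Kf * \<rho> powr (3 - b))" if "0 < \<rho>" for y :: R3 and \<rho>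
  proof -
    have "8 * unit_ball_vol 3 * \<rho> powr (3 - b) / (1 - 2 powr (3 - b)) = Kf * \<rho> powr (3 - b)"
      by (simp add: Kf_def)
    then show ?thesis using far_kernel[OF that b(1), of y] by simp
  qed
  have near: "(\<integral>\<^sup>+z. ennreal (if 0 < norm (y - z) \<and> norm (y - z) < \<rho> then norm (y - z) powr (-(b - 2)) else 0) \<partial>lborel)
      \<le> ennreal (Kn * \<rho> powr (3 - (b - 2)))" if "0 < \<rho>" for y :: R3 and \<rho>
  proof -
    have "2 powr (b - 2) * unit_ball_vol 3 * \<rho> powr (3 - (b - 2)) / (1 - (1/2) powr (3 - (b - 2))) = Kn * \<rho> powr (3 - (b - 2))"
      by (simp add: Kn_def)
    moreover have "b - 2 < 3" "0 < b - 2" using b by simp_all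
    ultimately show ?thesis using near_kernel[OF that, of "b - 2" y] by simp
  qed
  have cRsub: "ball x0 (c*R) \<subseteq> B" unfolding B_def using c R by (intro subset_ball) simp
  have zB: "\<eta> y = 0" if "y \<notin> B" for y using that cRsub z0 by blast
  have L2part: "L2_sq (\<lambda>x. \<eta> x * f x) \<Omega> \<le> ennreal (M\<^sup>2) * P"
  proof -
    have "L2_sq (\<lambda>x. \<eta> x * f x) \<Omega> \<le> (\<integral>\<^sup>+x. ennreal (M\<^sup>2) * (ennreal ((f x)\<^sup>2) * indicator B x) \<partial>lborel)"
      unfolding L2_sq_def
    proof (rule nn_integral_mono)
      fix x
      show "ennreal ((\<eta> x * f x)\<^sup>2) * indicator \<Omega> x \<le> ennreal (M\<^sup>2) * (ennreal ((f x)\<^sup>2) * indicator B x)"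
      proof (cases "x \<in> B")
        case True
        have "(\<eta> x * f x)\<^sup>2 \<le> M\<^sup>2 * (f x)\<^sup>2"
          using sq_le_M[of "\<eta> x" M] M by (simp add: power_mult_distrib mult_right_mono)
        then have "ennreal ((\<eta> x * f x)\<^sup>2) \<le> ennreal (M\<^sup>2) * ennreal ((f x)\<^sup>2)"
          by (simp add: ennreal_mult'[symmetric])
        moreover have "ennreal ((\<eta> x * f x)\<^sup>2) * indicator \<Omega> x \<le> ennreal ((\<eta> x * f x)\<^sup>2)"
          by (simp add: indicator_def)
        ultimately show ?thesis using True by simp
      next
        case False
        then show ?thesis using zB[of x] by simp
      qed
    qed
    also have "\<dots> = ennreal (M\<^sup>2) * P" unfolding P_eq by (rule nn_integral_cmult) measurable
    finally show ?thesis .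
  qed
  define \<delta> where "\<delta> = (1 - c) * R"
  have \<delta>: "0 < \<delta>" using c R by (simp add: \<delta>_def)
  have inner: "(\<integral>\<^sup>+z. ennreal ((\<eta> x * f x - \<eta> z * f z)\<^sup>2 / norm (x - z) powr (3 + 2 * t)) * indicator \<Omega> z \<partial>lborel) * indicator \<Omega> x
     \<le> ennreal (2 * M\<^sup>2) * (Sf x * indicator B x) + ennreal (2 * E) * (ennreal ((f x)\<^sup>2) * indicator B x)
       + ennreal (M\<^sup>2 * (1 - c) powr (-b)) * (ennreal (if R \<le> norm (x0 - x) then norm (x0 - x) powr (-b) else 0) * P)
       + ennreal (M\<^sup>2 * (Kf * \<delta> powr (3 - b))) * (ennreal ((f x)\<^sup>2) * indicator B x)" for x
  proof -
    define T1 where "T1 z = ennreal (2 * M\<^sup>2 * (indicator B x * indicator B z * (f x - f z)\<^sup>2 / norm (x - z) powr b))" for z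
    define T2 where "T2 z = ennreal (2 * (indicator B x * (f x)\<^sup>2) * (indicator B z * (\<eta> x - \<eta> z)\<^sup>2 / norm (x - z) powr b))" for z
    define T3 where "T3 z = ennreal (M\<^sup>2 * (1 - c) powr (-b) * (indicator B z * (f z)\<^sup>2) * (if R \<le> norm (x0 - x) then norm (x0 - x) powr (-b) else 0))" for z
    define T4 where "T4 z = ennreal (M\<^sup>2 * (indicator B x * (f x)\<^sup>2) * (if \<delta> \<le> norm (x - z) then norm (x - z) powr (-b) else 0))" for z
    have m1[measurable]: "T1 \<in> borel_measurable lborel" unfolding T1_def by measurable
    have m2[measurable]: "T2 \<in> borel_measurable lborel" unfolding T2_def by measurable
    have m3[measurable]: "T3 \<in> borel_measurable lborel" unfolding T3_def by measurable
    have m4[measurable]: "T4 \<in> borel_measurable lborel" unfolding T4_def by measurable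
    have "(\<integral>\<^sup>+z. ennreal ((\<eta> x * f x - \<eta> z * f z)\<^sup>2 / norm (x - z) powr (3 + 2 * t)) * indicator \<Omega> z \<partial>lborel) * indicator \<Omega> x
        \<le> (\<integral>\<^sup>+z. ennreal ((\<eta> x * f x - \<eta> z * f z)\<^sup>2 / norm (x - z) powr b) \<partial>lborel)"
    proof -
      have "(\<integral>\<^sup>+z. ennreal ((\<eta> x * f x - \<eta> z * f z)\<^sup>2 / norm (x - z) powr (3 + 2 * t)) * indicator \<Omega> z \<partial>lborel)
          \<le> (\<integral>\<^sup>+z. ennreal ((\<eta> x * f x - \<eta> z * f z)\<^sup>2 / norm (x - z) powr b) \<partial>lborel)"
        by (rule nn_integral_mono) (simp add: indicator_def b_def)
      moreover have "a * indicator \<Omega> x \<le> a" for a :: ennreal by (simp add: indicator_def)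
      ultimately show ?thesis by (meson order.trans)
    qed
    also have "\<dots> \<le> (\<integral>\<^sup>+z. T1 z + T2 z + T3 z + T4 z \<partial>lborel)"
    proof (rule nn_integral_mono)
      fix z
      show "ennreal ((\<eta> x * f x - \<eta> z * f z)\<^sup>2 / norm (x - z) powr b) \<le> T1 z + T2 z + T3 z + T4 z"
        unfolding T1_def T2_def T3_def T4_def B_def \<delta>_def
        by (rule pt_bound_enn[OF R c b(4) M(2) z0])
    qed
    also have "\<dots> = integral\<^sup>N lborel T1 + integral\<^sup>N lborel T2 + integral\<^sup>N lborel T3 + integral\<^sup>N lborel T4"
      by (subst nn_integral_add, measurable)+
    also have "\<dots> \<le> ennreal (2 * M\<^sup>2) * (Sf x * indicator B x) + ennreal (2 * E) * (ennreal ((f x)\<^sup>2) * indicator B x)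
       + ennreal (M\<^sup>2 * (1 - c) powr (-b)) * (ennreal (if R \<le> norm (x0 - x) then norm (x0 - x) powr (-b) else 0) * P)
       + ennreal (M\<^sup>2 * (Kf * \<delta> powr (3 - b))) * (ennreal ((f x)\<^sup>2) * indicator B x)"
    proof (intro add_mono)
      show "integral\<^sup>N lborel T1 \<le> ennreal (2 * M\<^sup>2) * (Sf x * indicator B x)"
      proof -
        have "T1 = (\<lambda>z. ennreal (2 * M\<^sup>2 * indicator B x) * (ennreal ((f x - f z)\<^sup>2 / norm (x - z) powr b) * indicator B z))"
          unfolding T1_def by (rule ext, rule enn_fact1) simp_all
        then have "integral\<^sup>N lborel T1 = (\<integral>\<^sup>+z. ennreal (2 * M\<^sup>2 * indicator B x) * (ennreal ((f x - f z)\<^sup>2 / norm (x - z) powr b) * indicator B z) \<partial>lborel)"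
          by (simp only:)
        also have "\<dots> = ennreal (2 * M\<^sup>2 * indicator B x) * Sf x"
          unfolding Sf_def by (rule nn_integral_cmult) measurable
        also have "\<dots> = ennreal (2 * M\<^sup>2) * (Sf x * indicator B x)"
          by (cases "x \<in> B") simp_all
        finally show ?thesis by simp
      qed
      show "integral\<^sup>N lborel T2 \<le> ennreal (2 * E) * (ennreal ((f x)\<^sup>2) * indicator B x)"
      proof -
        define h where "h z = ennreal (indicator B z * (\<eta> x - \<eta> z)\<^sup>2 / norm (x - z) powr b)" for z
        define nr where "nr z = ennreal (if 0 < norm (x - z) \<and> norm (x - z) < R then norm (x - z) powr (-(b - 2)) else 0)" for z
        define fr where "fr z = ennreal (if R \<le> norm (x - z) then norm (x - z) powr (-b) else 0)" for z
        have [measurable]: "h \<in> borel_measurable lborel" unfolding h_def by measurable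
        have [measurable]: "nr \<in> borel_measurable lborel" unfolding nr_def by measurable
        have [measurable]: "fr \<in> borel_measurable lborel" unfolding fr_def by measurable
        have "T2 = (\<lambda>z. ennreal (2 * (indicator B x * (f x)\<^sup>2)) * h z)"
          unfolding T2_def h_def by (rule ext, rule ennreal_mult') simp
        then have "integral\<^sup>N lborel T2 = (\<integral>\<^sup>+z. ennreal (2 * (indicator B x * (f x)\<^sup>2)) * h z \<partial>lborel)"
          by (simp only:)
        also have "\<dots> = ennreal (2 * (indicator B x * (f x)\<^sup>2)) * integral\<^sup>N lborel h"
          by (rule nn_integral_cmult) measurable
        also have "integral\<^sup>N lborel h \<le> ennreal E"
        proof -
          have "integral\<^sup>N lborel h \<le> (\<integral>\<^sup>+z. ennreal (L\<^sup>2) * nr z + ennreal (4 * M\<^sup>2) * fr z \<partial>lborel)"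
          proof (rule nn_integral_mono)
            fix z
            have "h z \<le> ennreal (L\<^sup>2 * (if 0 < norm (x - z) \<and> norm (x - z) < R then norm (x - z) powr (-(b - 2)) else 0)
                 + 4 * M\<^sup>2 * (if R \<le> norm (x - z) then norm (x - z) powr (-b) else 0))"
              unfolding h_def by (rule ennreal_leI, rule pt_eta[OF R b(3) M(2) L])
            also have "\<dots> = ennreal (L\<^sup>2) * nr z + ennreal (4 * M\<^sup>2) * fr z"
              unfolding nr_def fr_def by (simp add: ennreal_mult')
            finally show "h z \<le> ennreal (L\<^sup>2) * nr z + ennreal (4 * M\<^sup>2) * fr z" .
          qed
          also have "\<dots> = ennreal (L\<^sup>2) * integral\<^sup>N lborel nr + ennreal (4 * M\<^sup>2) * integral\<^sup>N lborel fr"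
            by (subst nn_integral_add, measurable, subst nn_integral_cmult, measurable, subst nn_integral_cmult, measurable)
          also have "\<dots> \<le> ennreal (L\<^sup>2) * ennreal (Kn * R powr (3 - (b - 2))) + ennreal (4 * M\<^sup>2) * ennreal (Kf * R powr (3 - b))"
            by (intro add_mono mult_left_mono) (use near[OF R, of x] far[OF R, of x] in \<open>simp_all add: nr_def[abs_def] fr_def[abs_def]\<close>)
          also have "\<dots> = ennreal E"
            unfolding E_def using Kn0 Kf0 by (simp add: ennreal_mult')
          finally show ?thesis .
        qed
        then have "ennreal (2 * (indicator B x * (f x)\<^sup>2)) * integral\<^sup>N lborel h \<le> ennreal (2 * (indicator B x * (f x)\<^sup>2)) * ennreal E"
          by (rule mult_left_mono) simp
        also have "\<dots> = ennreal (2 * E) * (ennreal ((f x)\<^sup>2) * indicator B x)"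
          using E0 by (cases "x \<in> B") (simp_all add: ennreal_mult' mult_ac)
        finally show ?thesis .
      qed
      show "integral\<^sup>N lborel T3 \<le> ennreal (M\<^sup>2 * (1 - c) powr (-b)) * (ennreal (if R \<le> norm (x0 - x) then norm (x0 - x) powr (-b) else 0) * P)"
      proof -
        define I where "I = (if R \<le> norm (x0 - x) then norm (x0 - x) powr (-b) else 0)"
        have I0: "0 \<le> I" by (simp add: I_def)
        have "T3 = (\<lambda>z. ennreal (M\<^sup>2 * (1 - c) powr (-b) * I) * (ennreal ((f z)\<^sup>2) * indicator B z))"
          unfolding T3_def I_def[symmetric] by (rule ext, rule enn_fact2) (simp_all add: I0)
        then have "integral\<^sup>N lborel T3 = (\<integral>\<^sup>+z. ennreal (M\<^sup>2 * (1 - c) powr (-b) * I) * (ennreal ((f z)\<^sup>2) * indicator B z) \<partial>lborel)"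
          by (simp only:)
        also have "\<dots> = ennreal (M\<^sup>2 * (1 - c) powr (-b) * I) * P"
          unfolding P_eq by (rule nn_integral_cmult) measurable
        also have "\<dots> = ennreal (M\<^sup>2 * (1 - c) powr (-b)) * (ennreal I * P)"
          using ennreal_mult'[of "M\<^sup>2 * (1 - c) powr (-b)" I] by (simp add: mult.assoc)
        finally show ?thesis by (simp add: I_def)
      qed
      show "integral\<^sup>N lborel T4 \<le> ennreal (M\<^sup>2 * (Kf * \<delta> powr (3 - b))) * (ennreal ((f x)\<^sup>2) * indicator B x)"
      proof -
        define fr where "fr z = ennreal (if \<delta> \<le> norm (x - z) then norm (x - z) powr (-b) else 0)" for z
        have [measurable]: "fr \<in> borel_measurable lborel" unfolding fr_def by measurable
        have "T4 = (\<lambda>z. ennreal (M\<^sup>2 * (indicator B x * (f x)\<^sup>2)) * fr z)"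
          unfolding T4_def fr_def by (rule ext, rule ennreal_mult') simp
        then have "integral\<^sup>N lborel T4 = (\<integral>\<^sup>+z. ennreal (M\<^sup>2 * (indicator B x * (f x)\<^sup>2)) * fr z \<partial>lborel)"
          by (simp only:)
        also have "\<dots> = ennreal (M\<^sup>2 * (indicator B x * (f x)\<^sup>2)) * integral\<^sup>N lborel fr"
          by (rule nn_integral_cmult) measurable
        also have "\<dots> \<le> ennreal (M\<^sup>2 * (indicator B x * (f x)\<^sup>2)) * ennreal (Kf * \<delta> powr (3 - b))"
          by (intro mult_left_mono) (use far[OF \<delta>, of x] in \<open>simp_all add: fr_def[abs_def]\<close>)
        also have "\<dots> = ennreal (M\<^sup>2 * (Kf * \<delta> powr (3 - b))) * (ennreal ((f x)\<^sup>2) * indicator B x)"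
        proof (cases "x \<in> B")
          case True
          then show ?thesis using ennreal_mult'[of "M\<^sup>2" "(f x)\<^sup>2"] ennreal_mult'[of "M\<^sup>2" "Kf * \<delta> powr (3 - b)"]
            by (simp add: mult_ac)
        next
          case False
          then show ?thesis by simp
        qed
        finally show ?thesis .
      qed
    qed
    finally show ?thesis .
  qed
  define IF where "IF x = ennreal (if R \<le> norm (x0 - x) then norm (x0 - x) powr (-b) else 0)" for x
  have [measurable]: "IF \<in> borel_measurable lborel" unfolding IF_def by measurable
  have KR0: "0 \<le> Kf * R powr (3 - b)" using Kf0 by simp
  have Kd0: "0 \<le> Kf * \<delta> powr (3 - b)" using Kf0 by simp
  have c0: "0 \<le> M\<^sup>2 * (1 - c) powr (-b)" by simp
  have semi: "Hs_semi_sq (\<lambda>x. \<eta> x * f x) \<Omega> t \<le> ennreal (2 * M\<^sup>2) * S + ennreal (2 * E) * P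
      + ennreal (M\<^sup>2 * (1 - c) powr (-b)) * (ennreal (Kf * R powr (3 - b)) * P) + ennreal (M\<^sup>2 * (Kf * \<delta> powr (3 - b))) * P"
  proof -
    have "Hs_semi_sq (\<lambda>x. \<eta> x * f x) \<Omega> t \<le> (\<integral>\<^sup>+x. ennreal (2 * M\<^sup>2) * (Sf x * indicator B x) + ennreal (2 * E) * (ennreal ((f x)\<^sup>2) * indicator B x)
       + ennreal (M\<^sup>2 * (1 - c) powr (-b)) * (IF x * P)
       + ennreal (M\<^sup>2 * (Kf * \<delta> powr (3 - b))) * (ennreal ((f x)\<^sup>2) * indicator B x) \<partial>lborel)"
      unfolding Hs_semi_sq_def IF_def by (rule nn_integral_mono) (rule inner)
    also have "\<dots> = ennreal (2 * M\<^sup>2) * S + ennreal (2 * E) * P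
      + ennreal (M\<^sup>2 * (1 - c) powr (-b)) * (integral\<^sup>N lborel IF * P) + ennreal (M\<^sup>2 * (Kf * \<delta> powr (3 - b))) * P"
      unfolding S_eq P_eq
      apply (subst nn_integral_add, measurable)+
      apply (subst nn_integral_cmult, measurable)+
      apply (subst nn_integral_multc, measurable)
      done
    also have "\<dots> \<le> ennreal (2 * M\<^sup>2) * S + ennreal (2 * E) * P
      + ennreal (M\<^sup>2 * (1 - c) powr (-b)) * (ennreal (Kf * R powr (3 - b)) * P) + ennreal (M\<^sup>2 * (Kf * \<delta> powr (3 - b))) * P"
      by (intro add_mono mult_left_mono mult_right_mono order_refl) (use far[OF R, of x0] in \<open>simp_all add: IF_def[abs_def]\<close>)
    finally show ?thesis .
  qed
  have "ennreal Kp * P = ennreal (M\<^sup>2) * P + ennreal (2 * E) * P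
      + ennreal (M\<^sup>2 * (1 - c) powr (-b)) * (ennreal (Kf * R powr (3 - b)) * P) + ennreal (M\<^sup>2 * (Kf * \<delta> powr (3 - b))) * P"
  proof -
    have "ennreal Kp = ennreal (M\<^sup>2) + ennreal (2 * E) + ennreal (M\<^sup>2 * (1 - c) powr (-b)) * ennreal (Kf * R powr (3 - b))
       + ennreal (M\<^sup>2 * (Kf * \<delta> powr (3 - b)))"
    proof -
      have "ennreal Kp = ennreal (M\<^sup>2) + ennreal (2 * E) + ennreal (M\<^sup>2 * (1 - c) powr (-b) * (Kf * R powr (3 - b)))
       + ennreal (M\<^sup>2 * (Kf * \<delta> powr (3 - b)))"
        unfolding Kp_def \<delta>_def[symmetric] by (rule enn_sum4) (use E0 KR0 Kd0 c0 in simp_all)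
      moreover have "ennreal (M\<^sup>2 * (1 - c) powr (-b) * (Kf * R powr (3 - b))) = ennreal (M\<^sup>2 * (1 - c) powr (-b)) * ennreal (Kf * R powr (3 - b))"
        by (rule ennreal_mult'[OF c0])
      ultimately show ?thesis by (simp only:)
    qed
    then show ?thesis by (simp add: distrib_right mult.assoc)
  qed
  note eqKp = this
  have "L2_sq (\<lambda>x. \<eta> x * f x) \<Omega> + Hs_semi_sq (\<lambda>x. \<eta> x * f x) \<Omega> t
     \<le> ennreal (M\<^sup>2) * P + (ennreal (2 * M\<^sup>2) * S + ennreal (2 * E) * P
      + ennreal (M\<^sup>2 * (1 - c) powr (-b)) * (ennreal (Kf * R powr (3 - b)) * P) + ennreal (M\<^sup>2 * (Kf * \<delta> powr (3 - b))) * P)"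
    by (rule add_mono[OF L2part semi])
  also have "\<dots> = ennreal (2 * M\<^sup>2) * S + (ennreal (M\<^sup>2) * P + ennreal (2 * E) * P
      + ennreal (M\<^sup>2 * (1 - c) powr (-b)) * (ennreal (Kf * R powr (3 - b)) * P) + ennreal (M\<^sup>2 * (Kf * \<delta> powr (3 - b))) * P)"
    by (simp only: ac_simps)
  also have "\<dots> = ennreal (2 * M\<^sup>2) * S + ennreal Kp * P" unfolding eqKp ..
  finally show ?thesis unfolding P_def S_def B_def .
qed

lemma final_sqrt:
  assumes K: "0 < K" and A: "0 < A" and m: "0 < m"
    and X: "X \<le> ennreal K * (ennreal (A\<^sup>2) * P + ennreal (m\<^sup>2) * S)"
  shows "ennsqrt X \<le> ennreal (sqrt K) * (ennreal A * ennsqrt P + ennreal m * ennsqrt S)"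
proof (cases "P = top \<or> S = top")
  case True
  then have "ennreal A * ennsqrt P + ennreal m * ennsqrt S = top"
    using A m by (auto simp: ennreal_mult_top)
  note t = this
  show ?thesis unfolding t using K by (simp add: ennreal_mult_top)
next
  case False
  then obtain p q where pq: "P = ennreal p" "S = ennreal q" "0 \<le> p" "0 \<le> q"
    by (metis ennreal_cases)
  have eq: "ennreal (K * (A\<^sup>2 * p + m\<^sup>2 * q)) = ennreal K * (ennreal (A\<^sup>2) * ennreal p + ennreal (m\<^sup>2) * ennreal q)"
    using K pq by (simp add: ennreal_mult')
  have "X \<le> ennreal (K * (A\<^sup>2 * p + m\<^sup>2 * q))"
    unfolding eq using X pq by simp
  then have "ennsqrt X \<le> ennsqrt (ennreal (K * (A\<^sup>2 * p + m\<^sup>2 * q)))" by (rule ennsqrt_mono)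
  also have "\<dots> = ennreal (sqrt K * sqrt (A\<^sup>2 * p + m\<^sup>2 * q))"
    using K pq by (simp add: ennsqrt_ennreal real_sqrt_mult)
  also have "\<dots> \<le> ennreal (sqrt K * (A * sqrt p + m * sqrt q))"
  proof (rule ennreal_leI, rule mult_left_mono)
    have "sqrt (A\<^sup>2 * p + m\<^sup>2 * q) \<le> sqrt (A\<^sup>2 * p) + sqrt (m\<^sup>2 * q)"
      using pq by (intro sqrt_add_le_add_sqrt) simp_all
    also have "\<dots> = A * sqrt p + m * sqrt q" using A m by (simp add: real_sqrt_mult)
    finally show "sqrt (A\<^sup>2 * p + m\<^sup>2 * q) \<le> A * sqrt p + m * sqrt q" .
  qed (use K in simp)
  also have "\<dots> = ennreal (sqrt K) * (ennreal A * ennsqrt P + ennreal m * ennsqrt S)"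
    using pq A m K by (simp add: ennsqrt_ennreal ennreal_mult')
  finally show ?thesis .
qed

lemma Kp_bound:
  fixes Kn Kf M L u v X Y q1 q2 :: real
  assumes Kn: "0 \<le> Kn" and Kf: "0 \<le> Kf" and M: "0 \<le> M" and L: "0 \<le> L" and u: "0 \<le> u" and v: "0 \<le> v"
    and q1: "0 \<le> q1" and q2: "0 \<le> q2" and X: "X = u\<^sup>2" and Y: "Y = v\<^sup>2"
  defines "K \<equiv> 2 + 2 * Kn + 8 * Kf + q1 * Kf + Kf * q2"
  shows "M\<^sup>2 + 2 * (L\<^sup>2 * (Kn * X) + 4 * M\<^sup>2 * (Kf * Y)) + M\<^sup>2 * q1 * (Kf * Y) + M\<^sup>2 * (Kf * (q2 * Y))
      \<le> K * (u * L + (v + 1) * M)\<^sup>2"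
proof -
  have K1: "1 \<le> K" using Kn Kf q1 q2 unfolding K_def by (simp add: add_nonneg_nonneg)
  have a: "M\<^sup>2 \<le> K * M\<^sup>2" using K1 by (simp add: mult_right_mono[of 1 K "M\<^sup>2", simplified])
  have b: "2 * (L\<^sup>2 * (Kn * X)) \<le> K * (u * L)\<^sup>2"
  proof -
    have "2 * (L\<^sup>2 * (Kn * X)) = (2 * Kn) * (u * L)\<^sup>2" by (simp add: X power_mult_distrib)
    also have "\<dots> \<le> K * (u * L)\<^sup>2" using Kf q1 q2 unfolding K_def
      by (intro mult_right_mono) (simp_all add: add_nonneg_nonneg)
    finally show ?thesis .
  qed
  have c: "2 * (4 * M\<^sup>2 * (Kf * Y)) + M\<^sup>2 * q1 * (Kf * Y) + M\<^sup>2 * (Kf * (q2 * Y)) \<le> K * (v * M)\<^sup>2"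
  proof -
    have "2 * (4 * M\<^sup>2 * (Kf * Y)) + M\<^sup>2 * q1 * (Kf * Y) + M\<^sup>2 * (Kf * (q2 * Y)) = (8 * Kf + q1 * Kf + Kf * q2) * (v * M)\<^sup>2"
      by (simp add: Y power_mult_distrib algebra_simps)
    also have "\<dots> \<le> K * (v * M)\<^sup>2" using Kn unfolding K_def by (intro mult_right_mono) simp_all
    finally show ?thesis .
  qed
  have d: "(u * L)\<^sup>2 + (v * M)\<^sup>2 + M\<^sup>2 \<le> (u * L + (v + 1) * M)\<^sup>2"
  proof -
    have e: "(u * L + (v + 1) * M)\<^sup>2 = (u * L)\<^sup>2 + (v * M)\<^sup>2 + M\<^sup>2 + 2 * (u * L * v * M + u * L * M + v * M * M)"
      by (simp add: power2_eq_square algebra_simps)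
    have "0 \<le> u * L * v * M + u * L * M + v * M * M" using u v L M by simp
    then have "(u * L)\<^sup>2 + (v * M)\<^sup>2 + M\<^sup>2 \<le> (u * L)\<^sup>2 + (v * M)\<^sup>2 + M\<^sup>2 + 2 * (u * L * v * M + u * L * M + v * M * M)"
      by simp
    then show ?thesis unfolding e .
  qed
  have "M\<^sup>2 + 2 * (L\<^sup>2 * (Kn * X) + 4 * M\<^sup>2 * (Kf * Y)) + M\<^sup>2 * q1 * (Kf * Y) + M\<^sup>2 * (Kf * (q2 * Y))
      \<le> K * ((u * L)\<^sup>2 + (v * M)\<^sup>2 + M\<^sup>2)" using a b c by (simp add: algebra_simps)
  also have "\<dots> \<le> K * (u * L + (v + 1) * M)\<^sup>2" using d K1 by (intro mult_left_mono) simp_all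
  finally show ?thesis .
qed

theorem lemmaA1:
  fixes \<Omega> :: "R3 set" and s :: real
  assumes "lipschitz_domain \<Omega>" and "0 < s" and "s < 1"
  shows "\<exists>C_loc>0. \<forall>c. 0 < c \<and> c < 1 \<longrightarrow> (\<exists>C_loc2>0.
     \<forall>(x0::R3) (R::real) (\<eta>::R3 \<Rightarrow> real) (f::R3 \<Rightarrow> real).
       0 < R \<and> ball x0 R \<subseteq> \<Omega> \<and> \<eta> \<in> C0_inf (ball x0 (c * R)) \<and> f \<in> borel_measurable lborel \<longrightarrow>
       Hneg_norm (\<lambda>x. \<eta> x * f x) \<Omega> s
         \<le> ennreal C_loc * sup_norm \<eta> (ball x0 (c * R)) * L2_norm f (ball x0 (c * R)) \<and>
       Hs_norm (\<lambda>x. \<eta> x * f x) \<Omega> (1 - s)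
         \<le> ennreal C_loc2 *
            ((ennreal (R powr s) * grad_sup_norm \<eta> (ball x0 (c * R))
               + ennreal (R powr (s - 1) + 1) * sup_norm \<eta> (ball x0 (c * R))) * L2_norm f (ball x0 R)
             + sup_norm \<eta> (ball x0 (c * R)) * Hs_semi f (ball x0 R) (1 - s)))"
proof -
  have "open \<Omega>" using assms(1) by (simp add: lipschitz_domain_def)
  then have \<Omega>m: "\<Omega> \<in> sets borel" by simp
  define t where "t = 1 - s"
  have t: "0 < t" "t < 1" using assms(2,3) by (simp_all add: t_def)
  define b where "b = 3 + 2 * t"
  define Kn where "Kn = 2 powr (b - 2) * unit_ball_vol 3 / (1 - (1/2) powr (3 - (b - 2)))"
  define Kf where "Kf = 8 * unit_ball_vol 3 / (1 - 2 powr (3 - b))"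
  have b: "3 < b" "b < 5" "2 < b" "0 < b" using t by (simp_all add: b_def)
  have V0: "0 \<le> unit_ball_vol 3" by simp
  have q1: "(1/2::real) powr (3 - (b - 2)) < 1" using b by (intro half_lt) simp
  have q2: "(2::real) powr (3 - b) < 1" using b by (intro powr_less_one) simp_all
  have Kn0: "0 \<le> Kn" unfolding Kn_def using q1 V0 by (intro divide_nonneg_pos mult_nonneg_nonneg) simp_all
  have Kf0: "0 \<le> Kf" unfolding Kf_def using q2 V0 by (intro divide_nonneg_pos mult_nonneg_nonneg) simp_all
  show ?thesis
  proof (rule exI[of _ "1::real"], intro conjI allI impI)
    show "0 < (1::real)" by simp
    fix c :: real assume c: "0 < c \<and> c < 1"
    define q1 where "q1 = (1 - c) powr (-b)"
    define q2 where "q2 = (1 - c) powr (3 - b)"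
    define K where "K = 2 + 2 * Kn + 8 * Kf + q1 * Kf + Kf * q2"
    have q10: "0 \<le> q1" and q20: "0 \<le> q2" by (simp_all add: q1_def q2_def)
    have K2: "2 \<le> K" unfolding K_def using Kn0 Kf0 q10 q20 by (simp add: add_nonneg_nonneg)
    then have K: "0 < K" by simp
    show "\<exists>C_loc2>0. \<forall>(x0::R3) (R::real) (\<eta>::R3 \<Rightarrow> real) (f::R3 \<Rightarrow> real).
       0 < R \<and> ball x0 R \<subseteq> \<Omega> \<and> \<eta> \<in> C0_inf (ball x0 (c * R)) \<and> f \<in> borel_measurable lborel \<longrightarrow>
       Hneg_norm (\<lambda>x. \<eta> x * f x) \<Omega> s
         \<le> ennreal 1 * sup_norm \<eta> (ball x0 (c * R)) * L2_norm f (ball x0 (c * R)) \<and>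
       Hs_norm (\<lambda>x. \<eta> x * f x) \<Omega> (1 - s)
         \<le> ennreal C_loc2 *
            ((ennreal (R powr s) * grad_sup_norm \<eta> (ball x0 (c * R))
               + ennreal (R powr (s - 1) + 1) * sup_norm \<eta> (ball x0 (c * R))) * L2_norm f (ball x0 R)
             + sup_norm \<eta> (ball x0 (c * R)) * Hs_semi f (ball x0 R) (1 - s))"
    proof (rule exI[of _ "sqrt K"], intro conjI allI impI)
      show "0 < sqrt K" using K by simp
      fix x0 :: R3 and R :: real and \<eta> f :: "R3 \<Rightarrow> real"
      assume H: "0 < R \<and> ball x0 R \<subseteq> \<Omega> \<and> \<eta> \<in> C0_inf (ball x0 (c * R)) \<and> f \<in> borel_measurable lborel"
      have R: "0 < R" and eta: "\<eta> \<in> C0_inf (ball x0 (c * R))" and f: "f \<in> borel_measurable lborel"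
        using H by auto
      show "Hneg_norm (\<lambda>x. \<eta> x * f x) \<Omega> s
         \<le> ennreal 1 * sup_norm \<eta> (ball x0 (c * R)) * L2_norm f (ball x0 (c * R))"
        by (rule part1[OF eta f])
      show "Hs_norm (\<lambda>x. \<eta> x * f x) \<Omega> (1 - s)
         \<le> ennreal (sqrt K) *
            ((ennreal (R powr s) * grad_sup_norm \<eta> (ball x0 (c * R))
               + ennreal (R powr (s - 1) + 1) * sup_norm \<eta> (ball x0 (c * R))) * L2_norm f (ball x0 R)
             + sup_norm \<eta> (ball x0 (c * R)) * Hs_semi f (ball x0 R) (1 - s))"
      proof -
        obtain M where M: "M \<ge> 0" "sup_norm \<eta> (ball x0 (c * R)) = ennreal M" "\<forall>x. \<bar>\<eta> x\<bar> \<le> M"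
          using eta_M[OF eta] by blast
        obtain L where L: "L \<ge> 0" "grad_sup_norm \<eta> (ball x0 (c * R)) = ennreal L"
            "\<forall>x y. \<bar>\<eta> x - \<eta> y\<bar> \<le> L * norm (x - y)"
          using eta_L[OF eta] by blast
        have z0: "\<And>y. y \<notin> ball x0 (c * R) \<Longrightarrow> \<eta> y = 0" using eta_zero[OF eta] by blast
        have etam: "\<eta> \<in> borel_measurable lborel"
          using borel_measurable_continuous_onI[OF eta_cont[OF eta]] by simp
        define P where "P = L2_sq f (ball x0 R)"
        define S where "S = Hs_semi_sq f (ball x0 R) t"
        define E where "E = L\<^sup>2 * (Kn * R powr (3 - (b - 2))) + 4 * M\<^sup>2 * (Kf * R powr (3 - b))"
        define Kp where "Kp = M\<^sup>2 + 2 * E + M\<^sup>2 * (1 - c) powr (-b) * (Kf * R powr (3 - b)) + M\<^sup>2 * (Kf * ((1 - c) * R) powr (3 - b))"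
        have sq: "L2_sq (\<lambda>x. \<eta> x * f x) \<Omega> + Hs_semi_sq (\<lambda>x. \<eta> x * f x) \<Omega> t
            \<le> ennreal (2 * M\<^sup>2) * S + ennreal Kp * P"
          unfolding P_def S_def
          using part2_sq[OF R conjunct1[OF c] conjunct2[OF c] t f \<Omega>m M(1) M(3) L(1) L(3) z0 etam,
              folded b_def, folded Kn_def Kf_def, folded E_def, folded Kp_def] .
        have HN: "Hs_norm (\<lambda>x. \<eta> x * f x) \<Omega> (1 - s) = ennsqrt (L2_sq (\<lambda>x. \<eta> x * f x) \<Omega> + Hs_semi_sq (\<lambda>x. \<eta> x * f x) \<Omega> t)"
          by (simp add: Hs_norm_def t_def)
        show ?thesis
        proof (cases "M = 0")
          case True
          then have "(\<lambda>x. \<eta> x * f x) = (\<lambda>x. 0)" using M(3) by auto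
          then have "Hs_norm (\<lambda>x. \<eta> x * f x) \<Omega> (1 - s) = 0"
            by (simp add: Hs_norm_def L2_sq_def Hs_semi_sq_def ennsqrt_def)
          then show ?thesis by simp
        next
          case False
          then have Mpos: "0 < M" using M(1) by simp
          define u where "u = R powr s"
          define v where "v = R powr (s - 1)"
          define A where "A = u * L + (v + 1) * M"
          have u0: "0 \<le> u" and v0: "0 \<le> v" by (simp_all add: u_def v_def)
          have Apos: "0 < A" unfolding A_def using u0 v0 L(1) Mpos
            by (intro add_nonneg_pos mult_nonneg_nonneg mult_pos_pos) simp_all
          have X: "R powr (3 - (b - 2)) = u\<^sup>2"
          proof -
            have "u\<^sup>2 = R powr (real 2 * s)" unfolding u_def using R by (intro powr_power) simp
            then show ?thesis by (simp add: b_def t_def)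
          qed
          have Y: "R powr (3 - b) = v\<^sup>2"
          proof -
            have "v\<^sup>2 = R powr (real 2 * (s - 1))" unfolding v_def using R by (intro powr_power) simp
            then show ?thesis by (simp add: b_def t_def algebra_simps)
          qed
          have Y2: "((1 - c) * R) powr (3 - b) = q2 * R powr (3 - b)" by (simp add: q2_def powr_mult)
          have KpA: "Kp \<le> K * A\<^sup>2"
          proof -
            have "Kp = M\<^sup>2 + 2 * (L\<^sup>2 * (Kn * R powr (3 - (b - 2))) + 4 * M\<^sup>2 * (Kf * R powr (3 - b)))
                + M\<^sup>2 * q1 * (Kf * R powr (3 - b)) + M\<^sup>2 * (Kf * (q2 * R powr (3 - b)))"
              unfolding Kp_def E_def q1_def Y2 ..
            also have "\<dots> \<le> K * A\<^sup>2" unfolding K_def A_def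
              by (rule Kp_bound[OF Kn0 Kf0 M(1) L(1) u0 v0 q10 q20 X Y])
            finally show ?thesis .
          qed
          have "L2_sq (\<lambda>x. \<eta> x * f x) \<Omega> + Hs_semi_sq (\<lambda>x. \<eta> x * f x) \<Omega> t
              \<le> ennreal K * (ennreal (A\<^sup>2) * P + ennreal (M\<^sup>2) * S)"
          proof -
            have "ennreal (2 * M\<^sup>2) \<le> ennreal K * ennreal (M\<^sup>2)"
              using K2 K by (simp add: ennreal_mult'[symmetric] mult_right_mono)
            moreover have "ennreal Kp \<le> ennreal K * ennreal (A\<^sup>2)"
              using KpA K by (simp add: ennreal_mult'[symmetric])
            ultimately have "ennreal (2 * M\<^sup>2) * S + ennreal Kp * P \<le> ennreal K * ennreal (M\<^sup>2) * S + ennreal K * ennreal (A\<^sup>2) * P"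
              by (intro add_mono mult_right_mono) simp_all
            also have "\<dots> = ennreal K * (ennreal (A\<^sup>2) * P + ennreal (M\<^sup>2) * S)"
              by (simp add: distrib_left mult.assoc add.commute)
            finally show ?thesis using sq by (rule order_trans[rotated])
          qed
          then have "ennsqrt (L2_sq (\<lambda>x. \<eta> x * f x) \<Omega> + Hs_semi_sq (\<lambda>x. \<eta> x * f x) \<Omega> t)
              \<le> ennreal (sqrt K) * (ennreal A * ennsqrt P + ennreal M * ennsqrt S)"
            by (rule final_sqrt[OF K Apos Mpos])
          also have "ennreal A = ennreal (R powr s) * grad_sup_norm \<eta> (ball x0 (c * R))
               + ennreal (R powr (s - 1) + 1) * sup_norm \<eta> (ball x0 (c * R))"
            unfolding A_def u_def v_def L(2) M(2) using L(1) M(1)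
            by (simp add: ennreal_mult' add_nonneg_nonneg)
          finally show ?thesis unfolding HN
            by (simp add: P_def S_def L2_norm_def Hs_semi_def M(2) t_def)
        qed
      qed
    qed
  qed
qed

end
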